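(* A connected split graph is connected-domishold if and only if it is total domishold.
   Context: A graph is split if its vertex set can be partitioned into a clique and an independent set. A connected dominating set of a connected graph $G$ is a set $S\subseteq V(G)$ such that every vertex not in $S$ has a neighbor in $S$ and $G[S]$ is connected. A graph $G=(V,E)$ is connected-domishold if there exist $w:V\to\mathbb{R}_{\ge0}$ and $t\in\mathbb{R}_{\ge0}$ such that for all $S\subseteq V$, $\sum_{x\in S}w(x)\ge t$ iff $S$ is a connected dominating set. A total dominating set of $G$ is a set $S\subseteq V(G)$ such that every vertex of $G$ has a neighbor in $S$. $G$ is total domishold if there exist $w:V\to\mathbb{R}_{\ge0}$ and $t\in\mathbb{R}_{\ge0}$ such that for all $S\subseteq V$, $\sum_{x\in S}w(x)\ge t$ iff $S$ is a total dominating set of $G$. *)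

theory Defs
  imports Complex_Main
begin

definition graph :: "'a set \<Rightarrow> ('a \<Rightarrow> 'a \<Rightarrow> bool) \<Rightarrow> bool" where
  "graph V E \<longleftrightarrow> finite V \<and> (\<forall>x y. E x y \<longrightarrow> x \<in> V \<and> y \<in> V)
     \<and> (\<forall>x y. E x y \<longrightarrow> E y x) \<and> (\<forall>x. \<not> E x x)"

definition induced_connected :: "('a \<Rightarrow> 'a \<Rightarrow> bool) \<Rightarrow> 'a set \<Rightarrow> bool" where
  "induced_connected E S \<longleftrightarrow>
     (\<forall>x\<in>S. \<forall>y\<in>S. (\<lambda>a b. a \<in> S \<and> b \<in> S \<and> E a b)\<^sup>*\<^sup>* x y)"

definition connected_graph :: "'a set \<Rightarrow> ('a \<Rightarrow> 'a \<Rightarrow> bool) \<Rightarrow> bool" where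
  "connected_graph V E \<longleftrightarrow> V \<noteq> {} \<and> induced_connected E V"

definition split_graph :: "'a set \<Rightarrow> ('a \<Rightarrow> 'a \<Rightarrow> bool) \<Rightarrow> bool" where
  "split_graph V E \<longleftrightarrow> (\<exists>K I. K \<union> I = V \<and> K \<inter> I = {}
     \<and> (\<forall>x\<in>K. \<forall>y\<in>K. x \<noteq> y \<longrightarrow> E x y)
     \<and> (\<forall>x\<in>I. \<forall>y\<in>I. \<not> E x y))"

definition connected_dominating_set :: "'a set \<Rightarrow> ('a \<Rightarrow> 'a \<Rightarrow> bool) \<Rightarrow> 'a set \<Rightarrow> bool" where
  "connected_dominating_set V E S \<longleftrightarrow> S \<subseteq> V
     \<and> (\<forall>v\<in>V - S. \<exists>u\<in>S. E v u) \<and> induced_connected E S"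

definition total_dominating_set :: "'a set \<Rightarrow> ('a \<Rightarrow> 'a \<Rightarrow> bool) \<Rightarrow> 'a set \<Rightarrow> bool" where
  "total_dominating_set V E S \<longleftrightarrow> S \<subseteq> V \<and> (\<forall>v\<in>V. \<exists>u\<in>S. E v u)"

definition connected_domishold :: "'a set \<Rightarrow> ('a \<Rightarrow> 'a \<Rightarrow> bool) \<Rightarrow> bool" where
  "connected_domishold V E \<longleftrightarrow> (\<exists>(w :: 'a \<Rightarrow> real) (t :: real).
     (\<forall>x\<in>V. w x \<ge> 0) \<and> t \<ge> 0 \<and>
     (\<forall>S. S \<subseteq> V \<longrightarrow> ((\<Sum>x\<in>S. w x) \<ge> t \<longleftrightarrow> connected_dominating_set V E S)))"

definition total_domishold :: "'a set \<Rightarrow> ('a \<Rightarrow> 'a \<Rightarrow> bool) \<Rightarrow> bool" where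
  "total_domishold V E \<longleftrightarrow> (\<exists>(w :: 'a \<Rightarrow> real) (t :: real).
     (\<forall>x\<in>V. w x \<ge> 0) \<and> t \<ge> 0 \<and>
     (\<forall>S. S \<subseteq> V \<longrightarrow> ((\<Sum>x\<in>S. w x) \<ge> t \<longleftrightarrow> total_dominating_set V E S)))"

end

theory Submission
  imports Defs
begin

lemma tds_cds:
  assumes g: "graph V E" and sp: "split_graph V E" and T: "total_dominating_set V E S"
  shows "connected_dominating_set V E S"
proof -
  obtain K I where KI: "K \<union> I = V" "K \<inter> I = {}"
    and Kc: "\<forall>x\<in>K. \<forall>y\<in>K. x \<noteq> y \<longrightarrow> E x y" and Ii: "\<forall>x\<in>I. \<forall>y\<in>I. \<not> E x y"
    using sp unfolding split_graph_def by blast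
  have SV: "S \<subseteq> V" and dom: "\<forall>v\<in>V. \<exists>u\<in>S. E v u" using T unfolding total_dominating_set_def by auto
  have ed: "\<And>x y. E x y \<Longrightarrow> x \<in> V \<and> y \<in> V" and sym: "\<And>x y. E x y \<Longrightarrow> E y x"
    using g unfolding graph_def by auto
  have key: "\<exists>k\<in>S\<inter>K. x = k \<or> E x k" if "x \<in> S" for x
  proof -
    have xV: "x \<in> V" using that SV by auto
    then obtain z where z: "z \<in> S" "E x z" using dom by auto
    show ?thesis
    proof (cases "x \<in> K")
      case True then show ?thesis using that by auto
    next
      case False
      then have "x \<in> I" using KI xV by auto
      moreover have "z \<in> V" using ed z by auto
      ultimately have "z \<in> K" using Ii z KI by auto
      then show ?thesis using z by auto
    qed
  qed
  let ?R = "\<lambda>a b. a \<in> S \<and> b \<in> S \<and> E a b"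
  have conn: "?R\<^sup>*\<^sup>* x y" if xy: "x \<in> S" "y \<in> S" for x y
  proof -
    obtain kx where kx: "kx \<in> S \<inter> K" "x = kx \<or> E x kx" using key xy by blast
    obtain ky where ky: "ky \<in> S \<inter> K" "y = ky \<or> E y ky" using key xy by blast
    have 1: "?R\<^sup>*\<^sup>* x kx"
    proof (cases "x = kx")
      case False then have "?R x kx" using kx xy by auto
      then show ?thesis by (rule r_into_rtranclp)
    qed simp
    have 2: "?R\<^sup>*\<^sup>* kx ky"
    proof (cases "kx = ky")
      case False then have "?R kx ky" using kx ky Kc by auto
      then show ?thesis by (rule r_into_rtranclp)
    qed simp
    have 3: "?R\<^sup>*\<^sup>* ky y"
    proof (cases "y = ky")
      case False then have "?R ky y" using ky xy sym by auto
      then show ?thesis by (rule r_into_rtranclp)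
    qed simp
    show ?thesis using 1 2 3 by (meson rtranclp_trans)
  qed
  show ?thesis unfolding connected_dominating_set_def induced_connected_def
    using SV dom conn by auto
qed

lemma cds_not_tds:
  assumes g: "graph V E" and C: "connected_dominating_set V E S" and nT: "\<not> total_dominating_set V E S"
  shows "\<exists>u. S = {u} \<and> u \<in> V \<and> (\<forall>x\<in>V-{u}. E x u)"
proof -
  have SV: "S \<subseteq> V" and dom: "\<forall>v\<in>V - S. \<exists>u\<in>S. E v u" and ic: "induced_connected E S"
    using C unfolding connected_dominating_set_def by auto
  obtain v where v: "v \<in> V" "\<forall>u\<in>S. \<not> E v u" using nT SV unfolding total_dominating_set_def by auto
  have vS: "v \<in> S" using v dom by auto
  have "S = {v}"
  proof (rule ccontr)
    assume "S \<noteq> {v}"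
    then obtain y where y: "y \<in> S" "y \<noteq> v" using vS by auto
    have "(\<lambda>a b. a \<in> S \<and> b \<in> S \<and> E a b)\<^sup>*\<^sup>* v y" using ic vS y unfolding induced_connected_def by auto
    then show False using y v
      by (cases rule: converse_rtranclpE) auto
  qed
  then show ?thesis using dom v by auto
qed

lemma univ_cds:
  assumes g: "graph V E" and u: "u \<in> S" and SV: "S \<subseteq> V" and U: "\<forall>x\<in>V-{u}. E x u"
  shows "connected_dominating_set V E S"
proof -
  have sym: "\<And>x y. E x y \<Longrightarrow> E y x" using g unfolding graph_def by auto
  let ?R = "\<lambda>a b. a \<in> S \<and> b \<in> S \<and> E a b"
  have a: "?R\<^sup>*\<^sup>* x u" if "x \<in> S" for x
  proof (cases "x = u")
    case False then have "?R x u" using that u U SV by auto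
    then show ?thesis by (rule r_into_rtranclp)
  qed simp
  have b: "?R\<^sup>*\<^sup>* u x" if "x \<in> S" for x
  proof (cases "x = u")
    case False then have "?R u x" using that u U SV sym by auto
    then show ?thesis by (rule r_into_rtranclp)
  qed simp
  have c: "?R\<^sup>*\<^sup>* x y" if "x \<in> S" "y \<in> S" for x y
    using a[OF that(1)] b[OF that(2)] by (rule rtranclp_trans)
  have d: "\<forall>v\<in>V - S. \<exists>x\<in>S. E v x" using U u by auto
  show ?thesis unfolding connected_dominating_set_def induced_connected_def
    using SV d c by blast
qed

theorem mainTheorem5:
  fixes V :: "'a set" and E :: "'a \<Rightarrow> 'a \<Rightarrow> bool"
  assumes "graph V E" and "connected_graph V E" and "split_graph V E"
  shows "connected_domishold V E \<longleftrightarrow> total_domishold V E"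
proof -
  note g = assms(1) and sp = assms(3)
  have finV: "finite V" and sym: "\<And>x y. E x y \<Longrightarrow> E y x" and irr: "\<And>x. \<not> E x x"
    and ed: "\<And>x y. E x y \<Longrightarrow> x \<in> V \<and> y \<in> V"
    using g unfolding graph_def by auto
  have Vne: "V \<noteq> {}" using assms(2) unfolding connected_graph_def by auto
  define U where "U = {u\<in>V. \<forall>x\<in>V-{u}. E x u}"
  have eqv: "total_dominating_set V E S \<longleftrightarrow> connected_dominating_set V E S"
    if "S \<inter> U = {}" for S
  proof
    assume "total_dominating_set V E S" then show "connected_dominating_set V E S"
      using tds_cds g sp by blast
  next
    assume c: "connected_dominating_set V E S"
    show "total_dominating_set V E S"
    proof (rule ccontr)
      assume "\<not> total_dominating_set V E S"
      then obtain u where "S = {u}" "u \<in> V" "\<forall>x\<in>V-{u}. E x u" using cds_not_tds g c by blast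
      then show False using that unfolding U_def by auto
    qed
  qed
  show ?thesis
  proof
    assume "connected_domishold V E"
    then obtain w :: "'a \<Rightarrow> real" and t :: real where w0: "\<forall>x\<in>V. w x \<ge> 0" and t0: "t \<ge> 0"
      and wt: "\<forall>S. S \<subseteq> V \<longrightarrow> ((\<Sum>x\<in>S. w x) \<ge> t \<longleftrightarrow> connected_dominating_set V E S)"
      unfolding connected_domishold_def by blast
    define N where "N = {S. S \<subseteq> V \<and> \<not> connected_dominating_set V E S}"
    define M where "M = Max ((\<lambda>S. sum w S) ` N)"
    have eN: "{} \<in> N" using Vne unfolding N_def connected_dominating_set_def by auto
    have "N \<subseteq> Pow V" unfolding N_def by auto
    then have fN: "finite N" using finV by (meson finite_Pow_iff finite_subset)
    have hM: "sum w S \<le> M" if "S \<in> N" for S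
      unfolding M_def using fN that by (intro Max_ge) auto
    have "M \<in> (\<lambda>S. sum w S) ` N" unfolding M_def using fN eN by (intro Max_in) auto
    then obtain S0 where "S0 \<in> N" "M = sum w S0" by auto
    then have Mt: "M < t" using wt unfolding N_def by auto
    have M0: "0 \<le> M" using hM[OF eN] by simp
    define n where "n = real (card V)"
    have n1: "n \<ge> 1" unfolding n_def using finV Vne by (simp add: Suc_leI card_gt_0_iff)
    define e where "e = (t - M) / (n + 1)"
    have e0: "e > 0" unfolding e_def using Mt n1 by auto
    have ene: "e * (n + 1) = t - M" unfolding e_def using n1 by simp
    have "e * 2 \<le> e * (n + 1)" using n1 e0 by (intro mult_left_mono) auto
    then have e2: "2 * e \<le> t" using ene M0 by linarith
    have en: "e * n < t - M" using ene e0 by (simp add: algebra_simps)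
    define w' where "w' = (\<lambda>x. if x \<in> U then t - e else w x + e)"
    have w'0: "\<forall>x\<in>V. w' x \<ge> 0" unfolding w'_def using w0 e0 e2 by auto
    have w'e: "w' x \<ge> e" if "x \<in> V" for x unfolding w'_def using w0 that e2 by auto
    have "\<forall>S. S \<subseteq> V \<longrightarrow> ((\<Sum>x\<in>S. w' x) \<ge> t \<longleftrightarrow> total_dominating_set V E S)"
    proof (intro allI impI)
      fix S assume SV: "S \<subseteq> V"
      have fS: "finite S" using SV finV finite_subset by auto
      show "(\<Sum>x\<in>S. w' x) \<ge> t \<longleftrightarrow> total_dominating_set V E S"
      proof (cases "S \<inter> U = {}")
        case True
        have "(\<Sum>x\<in>S. w' x) = (\<Sum>x\<in>S. w x + e)"
          using True unfolding w'_def by (intro sum.cong) auto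
        also have "\<dots> = sum w S + e * real (card S)" by (simp add: sum.distrib)
        finally have sw: "(\<Sum>x\<in>S. w' x) = sum w S + e * real (card S)" .
        have cS: "real (card S) \<le> n" unfolding n_def using card_mono[OF finV SV] by simp
        show ?thesis
        proof (cases "connected_dominating_set V E S")
          case True2: True
          have "sum w S \<ge> t" using wt SV True2 by auto
          moreover have "e * real (card S) \<ge> 0" using e0 by simp
          ultimately have "(\<Sum>x\<in>S. w' x) \<ge> t" using sw by linarith
          then show ?thesis using eqv[OF True] True2 by simp
        next
          case False
          have "S \<in> N" unfolding N_def using SV False by auto
          then have "sum w S \<le> M" by (rule hM)
          moreover have "e * real (card S) \<le> e * n" using cS e0 by simp
          ultimately have "(\<Sum>x\<in>S. w' x) < t" using sw en by linarith
          then show ?thesis using eqv[OF True] False by simp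
        qed
      next
        case False
        then obtain u where uS: "u \<in> S" and uU: "u \<in> U" by auto
        have uV: "u \<in> V" and uu: "\<forall>x\<in>V-{u}. E x u" using uU unfolding U_def by auto
        show ?thesis
        proof (cases "S = {u}")
          case True
          have "(\<Sum>x\<in>S. w' x) = t - e" using True uU unfolding w'_def by simp
          moreover have "\<not> total_dominating_set V E S"
            using True uV irr unfolding total_dominating_set_def by auto
          ultimately show ?thesis using e0 by simp
        next
          case False
          then obtain y where yS: "y \<in> S" and yu: "y \<noteq> u" using uS by auto
          have yV: "y \<in> V" using yS SV by auto
          have "(\<Sum>x\<in>{u,y}. w' x) \<le> (\<Sum>x\<in>S. w' x)"
            using uS yS fS w'0 SV by (intro sum_mono2) auto
          moreover have "(\<Sum>x\<in>{u,y}. w' x) = w' u + w' y" using yu by simp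
          moreover have "w' u = t - e" using uU unfolding w'_def by simp
          moreover have "w' y \<ge> e" using w'e yV by simp
          ultimately have ge: "(\<Sum>x\<in>S. w' x) \<ge> t" by linarith
          have "E u y" using uu yV yu sym by auto
          then have "total_dominating_set V E S"
            using uu yS uS SV unfolding total_dominating_set_def by (metis DiffI singletonD)
          then show ?thesis using ge by simp
        qed
      qed
    qed
    then show "total_domishold V E" unfolding total_domishold_def using w'0 t0 by blast
  next
    assume "total_domishold V E"
    then obtain w :: "'a \<Rightarrow> real" and t :: real where w0: "\<forall>x\<in>V. w x \<ge> 0" and t0: "t \<ge> 0"
      and wt: "\<forall>S. S \<subseteq> V \<longrightarrow> ((\<Sum>x\<in>S. w x) \<ge> t \<longleftrightarrow> total_dominating_set V E S)"
      unfolding total_domishold_def by blast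
    define w' where "w' = (\<lambda>x. if x \<in> U then w x + t else w x)"
    have w'0: "\<forall>x\<in>V. w' x \<ge> 0" unfolding w'_def using w0 t0 by auto
    have "\<forall>S. S \<subseteq> V \<longrightarrow> ((\<Sum>x\<in>S. w' x) \<ge> t \<longleftrightarrow> connected_dominating_set V E S)"
    proof (intro allI impI)
      fix S assume SV: "S \<subseteq> V"
      have fS: "finite S" using SV finV finite_subset by auto
      show "(\<Sum>x\<in>S. w' x) \<ge> t \<longleftrightarrow> connected_dominating_set V E S"
      proof (cases "S \<inter> U = {}")
        case True
        have "(\<Sum>x\<in>S. w' x) = sum w S"
          using True unfolding w'_def by (intro sum.cong) auto
        then show ?thesis using wt SV eqv[OF True] by simp
      next
        case False
        then obtain u where uS: "u \<in> S" and uU: "u \<in> U" by auto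
        have uV: "u \<in> V" and uu: "\<forall>x\<in>V-{u}. E x u" using uU unfolding U_def by auto
        have "w' u \<le> (\<Sum>x\<in>S. w' x)"
          using uS fS w'0 SV by (intro member_le_sum) auto
        moreover have "w' u \<ge> t" using uU w0 uV unfolding w'_def by auto
        moreover have "connected_dominating_set V E S" using univ_cds[OF g uS SV uu] .
        ultimately show ?thesis by simp
      qed
    qed
    then show "connected_domishold V E" unfolding connected_domishold_def using w'0 t0 by blast
  qed
qed

end
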